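(* Let $M\ge2$ be an integer and consider the class of random variables $X$ whose distribution is unimodal with support contained in $\{1,\dots,M\}$. Within this class, $\nu_1(X)\le\frac{M-1}{4}$, and equality holds if and only if $X$ is uniformly distributed on $\{1,\dots,M\}$.
   Context: For a real random variable $X$, its Lévy concentration function is $Q_X(\varepsilon)=\sup_{x_0\in\mathbb{R}}\Pr\{X\in[x_0,x_0+\varepsilon]\}$, $\varepsilon>0$, and $Q_X(0):=\lim_{\varepsilon\downarrow0}Q_X(\varepsilon)=\max_k\Pr(X=k)$. For integer-valued $X$, $\nu_1(X)=\frac12\int_0^\infty(1-Q_X(\varepsilon))\,d\varepsilon=\frac12\sum_{k=0}^\infty(1-Q_X(k))$. A distribution $p$ on the integers is unimodal if there exists an integer $m$ with $p_k\ge p_{k-1}$ for all $k\le m$ and $p_{k+1}\le p_k$ for all $k\ge m$. *)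

theory Defs
  imports "HOL-Probability.Probability"
begin

text \<open>An integer-valued random variable is represented by its distribution, an int pmf.\<close>

definition levy_conc :: "int pmf \<Rightarrow> real \<Rightarrow> real" where
  "levy_conc p \<epsilon> =
     (SUP x0::real. measure_pmf.prob p {k. x0 \<le> real_of_int k \<and> real_of_int k \<le> x0 + \<epsilon>})"

definition nu1 :: "int pmf \<Rightarrow> real" where
  "nu1 p = (1/2) * integral {0..} (\<lambda>\<epsilon>. 1 - levy_conc p \<epsilon>)"

definition unimodal_pmf :: "int pmf \<Rightarrow> bool" where
  "unimodal_pmf p \<longleftrightarrow> (\<exists>m::int.
      (\<forall>k. k \<le> m \<longrightarrow> pmf p k \<ge> pmf p (k - 1)) \<and>
      (\<forall>k. k \<ge> m \<longrightarrow> pmf p (k + 1) \<le> pmf p k))"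

end

theory Submission
  imports Defs
begin


lemma levy_bdd: "bdd_above (range (\<lambda>x0::real. measure_pmf.prob p {k. x0 \<le> real_of_int k \<and> real_of_int k \<le> x0 + e}))"
  by (rule bdd_aboveI2[where M=1]) (rule measure_pmf.prob_le_1)

lemma levy_ge: "measure_pmf.prob p {k. x0 \<le> real_of_int k \<and> real_of_int k \<le> x0 + e} \<le> levy_conc p e"
  unfolding levy_conc_def by (rule cSUP_upper[OF _ levy_bdd]) simp

lemma levy_le1: "levy_conc p e \<le> 1"
  unfolding levy_conc_def by (rule cSUP_least) (auto intro: measure_pmf.prob_le_1)

lemma levy_win: "levy_conc p (real n) \<ge> sum (pmf p) {a..a + int n}"
proof -
  have "{k. real_of_int a \<le> real_of_int k \<and> real_of_int k \<le> real_of_int a + real n} = {a..a + int n}"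
    by auto
  then show ?thesis using levy_ge[of p "real_of_int a" "real n"]
    by (simp add: measure_measure_pmf_finite)
qed

lemma levy_floor:
  assumes "e \<ge> 0"
  shows "levy_conc p e = levy_conc p (real (nat \<lfloor>e\<rfloor>))"
proof (rule antisym)
  show "levy_conc p e \<le> levy_conc p (real (nat \<lfloor>e\<rfloor>))"
    unfolding levy_conc_def[of p e]
  proof (rule cSUP_least)
    fix x0 :: real
    have "{k. x0 \<le> real_of_int k \<and> real_of_int k \<le> x0 + e} \<subseteq>
          {k. real_of_int \<lceil>x0\<rceil> \<le> real_of_int k \<and> real_of_int k \<le> real_of_int \<lceil>x0\<rceil> + real (nat \<lfloor>e\<rfloor>)}"
    proof safe
      fix k :: int assume h: "x0 \<le> real_of_int k" "real_of_int k \<le> x0 + e"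
      show "real_of_int \<lceil>x0\<rceil> \<le> real_of_int k" using h by (simp add: ceiling_le)
      have "k - \<lceil>x0\<rceil> \<le> \<lfloor>e\<rfloor>"
      proof -
        have "real_of_int (k - \<lceil>x0\<rceil>) \<le> e" using h le_of_int_ceiling[of x0] by simp linarith
        then show ?thesis by (simp add: le_floor_iff)
      qed
      then show "real_of_int k \<le> real_of_int \<lceil>x0\<rceil> + real (nat \<lfloor>e\<rfloor>)" using assms by linarith
    qed
    then have "measure_pmf.prob p {k. x0 \<le> real_of_int k \<and> real_of_int k \<le> x0 + e} \<le>
       measure_pmf.prob p {k. real_of_int \<lceil>x0\<rceil> \<le> real_of_int k \<and> real_of_int k \<le> real_of_int \<lceil>x0\<rceil> + real (nat \<lfloor>e\<rfloor>)}"
      by (intro measure_pmf.finite_measure_mono) auto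
    also have "\<dots> \<le> levy_conc p (real (nat \<lfloor>e\<rfloor>))" by (rule levy_ge)
    finally show "measure_pmf.prob p {k. x0 \<le> real_of_int k \<and> real_of_int k \<le> x0 + e} \<le> levy_conc p (real (nat \<lfloor>e\<rfloor>))" .
  qed simp
next
  show "levy_conc p (real (nat \<lfloor>e\<rfloor>)) \<le> levy_conc p e"
    unfolding levy_conc_def[of p "real (nat \<lfloor>e\<rfloor>)"]
  proof (rule cSUP_least)
    fix x0 :: real
    have "measure_pmf.prob p {k. x0 \<le> real_of_int k \<and> real_of_int k \<le> x0 + real (nat \<lfloor>e\<rfloor>)} \<le>
       measure_pmf.prob p {k. x0 \<le> real_of_int k \<and> real_of_int k \<le> x0 + e}"
      using assms by (intro measure_pmf.finite_measure_mono) (auto, meson add_left_mono of_int_floor_le order_trans)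
    also have "\<dots> \<le> levy_conc p e" by (rule levy_ge)
    finally show "measure_pmf.prob p {k. x0 \<le> real_of_int k \<and> real_of_int k \<le> x0 + real (nat \<lfloor>e\<rfloor>)} \<le> levy_conc p e" .
  qed simp
qed

lemma nu1_sum:
  assumes N: "\<And>n. n \<ge> N \<Longrightarrow> levy_conc p (real n) = 1"
  shows "nu1 p = 1/2 * (\<Sum>n<N. 1 - levy_conc p (real n))"
proof -
  define c where "c n = 1 - levy_conc p (real n)" for n
  have g: "((\<lambda>e. \<Sum>n<N. if e \<in> {real n..real n + 1} then c n else 0) has_integral (\<Sum>n<N. c n)) {0..}"
  proof (rule has_integral_sum)
    fix n assume "n \<in> {..<N}"
    have "((\<lambda>x. c n) has_integral c n) {real n..real n + 1}"
      using has_integral_const_real[of "c n" "real n" "real n + 1"] by simp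
    then show "((\<lambda>e. if e \<in> {real n..real n + 1} then c n else 0) has_integral c n) {0..}"
      by (subst has_integral_restrict) auto
  qed simp
  have f: "((\<lambda>e. 1 - levy_conc p e) has_integral (\<Sum>n<N. c n)) {0..}"
  proof (rule has_integral_spike_finite[OF _ _ g])
    show "finite (real ` {..N})" by simp
    fix x assume x: "x \<in> {0..} - real ` {..N}"
    then have x0: "x \<ge> 0" by simp
    define n0 where "n0 = nat \<lfloor>x\<rfloor>"
    have lx: "levy_conc p x = levy_conc p (real n0)" unfolding n0_def by (rule levy_floor[OF x0])
    have n0x: "real n0 \<le> x" "x < real n0 + 1" unfolding n0_def using x0 by linarith+
    show "1 - levy_conc p x = (\<Sum>n<N. if x \<in> {real n..real n + 1} then c n else 0)"
    proof (cases "n0 \<ge> N")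
      case True
      have "(\<Sum>n<N. if x \<in> {real n..real n + 1} then c n else 0) = (\<Sum>n<N. 0)"
      proof (rule sum.cong)
        fix n assume n: "n \<in> {..<N}"
        have "x \<notin> {real n..real n + 1}"
        proof
          assume "x \<in> {real n..real n + 1}"
          then have "x \<le> real n + 1" by simp
          moreover have "real n + 1 \<le> real N" using n by simp
          moreover have "real N \<le> x" using True n0x by linarith
          ultimately have "x = real N" by linarith
          then show False using x by auto
        qed
        then show "(if x \<in> {real n..real n + 1} then c n else 0) = 0" by (simp only: if_False)
      qed simp
      then show ?thesis using lx N[OF True] by simp
    next
      case False
      have nx: "x \<noteq> real n0"
      proof
        assume "x = real n0" then show False using x False by auto
      qed
      have "(\<Sum>n<N. if x \<in> {real n..real n + 1} then c n else 0) = (\<Sum>n<N. if n = n0 then c n else 0)"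
      proof (rule sum.cong)
        fix n assume n: "n \<in> {..<N}"
        have "x \<in> {real n..real n + 1} \<longleftrightarrow> n = n0"
        proof
          assume "x \<in> {real n..real n + 1}"
          then have a: "real n \<le> x" "x \<le> real n + 1" by auto
          have "n \<le> n0" using a n0x by linarith
          moreover have "n0 \<le> n + 1" using a n0x by linarith
          moreover have "n0 \<noteq> n + 1"
          proof
            assume "n0 = n + 1"
            then have "x = real n0" using a n0x by simp
            then show False using nx by simp
          qed
          ultimately show "n = n0" by linarith
        next
          assume "n = n0" then show "x \<in> {real n..real n + 1}" using n0x by auto
        qed
        then show "(if x \<in> {real n..real n + 1} then c n else 0) = (if n = n0 then c n else 0)" by simp
      qed simp
      also have "\<dots> = c n0" using False by simp
      finally show ?thesis using lx c_def by simp
    qed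
  qed
  then show ?thesis unfolding nu1_def c_def by (simp add: integral_unique)
qed



lemma pmf_zero_out: "set_pmf p \<subseteq> S \<Longrightarrow> k \<notin> S \<Longrightarrow> pmf p k = 0"
  by (meson set_pmf_iff subsetD)

lemma key:
  fixes M :: int and p :: "int pmf" and d :: nat
  assumes uni: "unimodal_pmf p" and supp: "set_pmf p \<subseteq> {1..M}" and dM: "int d + 1 \<le> M"
  shows "\<exists>a. 1 \<le> a \<and> a + int d \<le> M \<and> real (d + 1) \<le> real_of_int M * sum (pmf p) {a..a + int d}"
proof -
  obtain m where upc: "\<And>k. k \<le> m \<Longrightarrow> pmf p (k - 1) \<le> pmf p k"
    and downc: "\<And>k. k \<ge> m \<Longrightarrow> pmf p (k + 1) \<le> pmf p k"
    using uni unfolding unimodal_pmf_def by blast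
  have up: "pmf p i \<le> pmf p j" if "i \<le> j" "j \<le> m" for i j
  proof -
    have "j \<le> m \<longrightarrow> pmf p i \<le> pmf p j" using that(1)
    proof (induction j rule: int_ge_induct)
      case base then show ?case by simp
    next
      case (step j)
      show ?case using step upc[of "j+1"] by auto
    qed
    then show ?thesis using that by simp
  qed
  have down: "pmf p j \<le> pmf p i" if "m \<le> i" "i \<le> j" for i j
  proof -
    have "pmf p j \<le> pmf p i" using that(2)
    proof (induction j rule: int_ge_induct)
      case base then show ?case by simp
    next
      case (step j)
      show ?case using step downc[of j] that(1) by auto
    qed
    then show ?thesis .
  qed
  define m' where "m' = max 1 (min M m)"
  have m'r: "1 \<le> m'" "m' \<le> M" using dM unfolding m'_def by auto
  have up': "pmf p i \<le> pmf p j" if "1 \<le> i" "i \<le> j" "j \<le> m'" for i j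
  proof (cases "j \<le> m")
    case True then show ?thesis using up that by auto
  next
    case False
    then have "m' = 1" using that False unfolding m'_def by (auto simp: max_def min_def split: if_splits)
    then have "i = j" using that by auto
    then show ?thesis by simp
  qed
  have down': "pmf p j \<le> pmf p i" if "m' \<le> i" "i \<le> j" "j \<le> M" for i j
  proof (cases "m \<le> i")
    case True then show ?thesis using down that by auto
  next
    case False
    then have "m' = M" using that False unfolding m'_def by (auto simp: max_def min_def split: if_splits)
    then have "i = j" using that by auto
    then show ?thesis by simp
  qed
  define P where "P a b \<longleftrightarrow> 1 \<le> a \<and> b \<le> M \<and> a \<le> m' \<and> m' \<le> b \<and>
      (\<forall>k\<in>{a..b}. \<forall>j\<in>{1..M} - {a..b}. pmf p j \<le> pmf p k)" for a b
  have ex: "int e + 1 \<le> M \<longrightarrow> (\<exists>a. P a (a + int e))" for e :: nat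
  proof (induction e)
    case 0
    have "\<forall>k\<in>{m'..m'}. \<forall>j\<in>{1..M} - {m'..m'}. pmf p j \<le> pmf p k"
    proof (intro ballI)
      fix k j assume k: "k \<in> {m'..m'}" and j: "j \<in> {1..M} - {m'..m'}"
      have kk: "k = m'" using k by auto
      show "pmf p j \<le> pmf p k"
      proof (cases "j \<le> m'")
        case True then show ?thesis using up'[of j m'] j kk by auto
      next
        case False then show ?thesis using down'[of m' j] j kk by auto
      qed
    qed
    then have "P m' m'" unfolding P_def using m'r by auto
    then show ?case by auto
  next
    case (Suc e)
    show ?case
    proof
      assume eM: "int (Suc e) + 1 \<le> M"
      then obtain a where Pa: "P a (a + int e)" using Suc by auto
      define b where "b = a + int e"
      have Pab: "1 \<le> a" "b \<le> M" "a \<le> m'" "m' \<le> b"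
        and old: "\<And>k j. k \<in> {a..b} \<Longrightarrow> j \<in> {1..M} - {a..b} \<Longrightarrow> pmf p j \<le> pmf p k"
        using Pa unfolding P_def b_def by auto
      have ab: "1 < a \<or> b < M" using eM Pab unfolding b_def by auto
      show "\<exists>a. P a (a + int (Suc e))"
      proof (cases "1 < a \<and> (b = M \<or> pmf p (b + 1) \<le> pmf p (a - 1))")
        case True
        have "P (a - 1) b" unfolding P_def
        proof (intro conjI ballI)
          fix k j assume k: "k \<in> {a - 1..b}" and j: "j \<in> {1..M} - {a - 1..b}"
          show "pmf p j \<le> pmf p k"
          proof (cases "k = a - 1")
            case False then show ?thesis using old[of k j] k j by auto
          next
            case kk: True
            show ?thesis
            proof (cases "j < a - 1")
              case True then show ?thesis using up'[of j "a - 1"] kk j Pab by auto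
            next
              case False
              then have jb: "b < j" "j \<le> M" using j by auto
              then have "b \<noteq> M" by auto
              then have "pmf p (b + 1) \<le> pmf p (a - 1)" using True by auto
              moreover have "pmf p j \<le> pmf p (b + 1)" using down'[of "b+1" j] jb Pab by auto
              ultimately show ?thesis using kk by auto
            qed
          qed
        qed (use True Pab in auto)
        then show ?thesis by (intro exI[of _ "a - 1"]) (simp add: b_def)
      next
        case False
        have bM: "b < M" using False ab Pab by auto
        have "P a (b + 1)" unfolding P_def
        proof (intro conjI ballI)
          fix k j assume k: "k \<in> {a..b + 1}" and j: "j \<in> {1..M} - {a..b + 1}"
          show "pmf p j \<le> pmf p k"
          proof (cases "k = b + 1")
            case False then show ?thesis using old[of k j] k j by auto
          next
            case kk: True
            show ?thesis
            proof (cases "j < a")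
              case True
              then have "1 < a" using j by auto
              then have "pmf p (a - 1) < pmf p (b + 1)" using False bM by auto
              moreover have "pmf p j \<le> pmf p (a - 1)" using up'[of j "a - 1"] True j Pab by auto
              ultimately show ?thesis using kk by auto
            next
              case False
              then have jb: "b + 1 < j" "j \<le> M" using j by auto
              then show ?thesis using down'[of "b+1" j] kk Pab by auto
            qed
          qed
        qed (use bM Pab in auto)
        then show ?thesis by (intro exI[of _ a]) (simp add: b_def ac_simps)
      qed
    qed
  qed
  obtain a where Pa: "P a (a + int d)" using ex[of d] dM by auto
  define I where "I = {a..a + int d}"
  define J where "J = {1..M} - I"
  have Pab: "1 \<le> a" "a + int d \<le> M"
    and old: "\<And>k j. k \<in> I \<Longrightarrow> j \<in> J \<Longrightarrow> pmf p j \<le> pmf p k"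
    using Pa unfolding P_def I_def J_def by auto
  have IM: "I \<subseteq> {1..M}" using Pab unfolding I_def by auto
  have s1: "sum (pmf p) {1..M} = 1" using supp by (intro sum_pmf_eq_1) auto
  have sIJ: "sum (pmf p) {1..M} = sum (pmf p) I + sum (pmf p) J"
    unfolding J_def using IM by (metis finite_atLeastAtMost_int sum.subset_diff add.commute)
  have cI: "card I = d + 1" unfolding I_def by simp
  have cJ: "real (card J) = real_of_int M - real (d + 1)"
  proof -
    have "card J = card {1..M} - card I" unfolding J_def using IM by (subst card_Diff_subset) (auto simp: I_def)
    moreover have "card {1..M} = nat M" by simp
    moreover have "card I \<le> card {1..M}" using IM by (intro card_mono) auto
    ultimately show ?thesis using cI dM by (simp add: of_nat_diff)
  qed
  have "(\<Sum>k\<in>I. \<Sum>j\<in>J. pmf p j) \<le> (\<Sum>k\<in>I. \<Sum>j\<in>J. pmf p k)"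
    by (intro sum_mono old)
  then have "real (card I) * sum (pmf p) J \<le> real (card J) * sum (pmf p) I"
    by (simp add: sum_distrib_left mult.commute)
  then have "real (d+1) * (1 - sum (pmf p) I) \<le> (real_of_int M - real (d + 1)) * sum (pmf p) I"
    using cI cJ s1 sIJ by (simp add: eq_diff_eq[symmetric])
  then have "real (d + 1) \<le> real_of_int M * sum (pmf p) I" by (simp add: algebra_simps)
  then show ?thesis using Pab unfolding I_def by blast
qed



lemma sum_lin: "(\<Sum>n<N. real (n + 1)) = real N * (real N + 1) / 2"
  by (induction N) (auto simp: field_simps)

theorem mainTheorem16:
  fixes M :: int and p :: "int pmf"
  assumes "M \<ge> 2"
    and "unimodal_pmf p"
    and "set_pmf p \<subseteq> {1..M}"
  shows "nu1 p \<le> (real_of_int M - 1) / 4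
         \<and> (nu1 p = (real_of_int M - 1) / 4 \<longleftrightarrow> p = pmf_of_set {1..M})"
proof -
  define N where "N = nat (M - 1)"
  define L where "L n = levy_conc p (real n)" for n
  have rN: "real N = real_of_int M - 1" unfolding N_def using assms(1) by simp
  have Mpos: "real_of_int M > 0" using assms(1) by simp
  have s1: "sum (pmf p) {1..M} = 1" using assms(3) by (intro sum_pmf_eq_1) auto
  have LN: "levy_conc p (real n) = 1" if "n \<ge> N" for n
  proof (rule antisym[OF levy_le1])
    have "sum (pmf p) {1..M} \<le> sum (pmf p) {1..1 + int n}"
      using that unfolding N_def by (intro sum_mono2) auto
    also have "\<dots> \<le> levy_conc p (real n)" by (rule levy_win)
    finally show "1 \<le> levy_conc p (real n)" using s1 by simp
  qed
  have nu: "nu1 p = 1/2 * (\<Sum>n<N. 1 - L n)" unfolding L_def by (rule nu1_sum[OF LN])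
  define b where "b n = 1 - real (n + 1) / real_of_int M" for n
  have Lge: "real (n + 1) / real_of_int M \<le> L n" if nN: "n < N" for n
  proof -
    obtain a where a: "1 \<le> a" "a + int n \<le> M" "real (n + 1) \<le> real_of_int M * sum (pmf p) {a..a + int n}"
    proof -
      have "int n + 1 \<le> M" using nN unfolding N_def by linarith
      then show ?thesis using key[OF assms(2,3), of n] that by auto
    qed
    have "real (n + 1) / real_of_int M \<le> sum (pmf p) {a..a + int n}"
      using a(3) Mpos by (simp add: divide_le_eq mult.commute)
    also have "\<dots> \<le> L n" unfolding L_def by (rule levy_win)
    finally show ?thesis .
  qed
  have bsum: "(\<Sum>n<N. b n) = (real_of_int M - 1) / 2"
  proof -
    have "(\<Sum>n<N. b n) = real N - (\<Sum>n<N. real (n + 1)) / real_of_int M"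
      unfolding b_def by (simp add: sum_subtractf sum_divide_distrib)
    also have "\<dots> = (real_of_int M - 1) / 2" unfolding sum_lin rN using Mpos
      by (simp add: field_simps)
    finally show ?thesis .
  qed
  have tb: "1 - L n \<le> b n" if "n < N" for n using Lge[OF that] unfolding b_def by simp
  have le: "(\<Sum>n<N. 1 - L n) \<le> (\<Sum>n<N. b n)" by (intro sum_mono tb) auto
  have part1: "nu1 p \<le> (real_of_int M - 1) / 4" using le bsum nu by simp
  have L0: "pmf p k \<le> L 0" for k using levy_win[where p=p and n=0 and a=k] unfolding L_def by simp
  have dir1: "p = pmf_of_set {1..M}" if eq: "nu1 p = (real_of_int M - 1) / 4"
  proof -
    have S: "(\<Sum>n<N. 1 - L n) = (real_of_int M - 1) / 2" using eq nu by linarith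
    have "(\<Sum>n<N. b n - (1 - L n)) = (\<Sum>n<N. b n) - (\<Sum>n<N. 1 - L n)"
      by (rule sum_subtractf)
    also have "\<dots> = 0" using S bsum by linarith
    finally have s0: "(\<Sum>n<N. b n - (1 - L n)) = 0" .
    have nn: "\<forall>n\<in>{..<N}. 0 \<le> b n - (1 - L n)" using tb by auto
    have all0: "\<forall>n\<in>{..<N}. b n - (1 - L n) = 0"
      using sum_nonneg_eq_0_iff[of "{..<N}" "\<lambda>n. b n - (1 - L n)"] s0 nn by blast
    have N0: "0 < N" unfolding N_def using assms(1) by simp
    have "b 0 - (1 - L 0) = 0" using all0 N0 by blast
    then have "L 0 = 1 - b 0" by linarith
    then have L0v: "L 0 = 1 / real_of_int M" unfolding b_def by simp
    have pk: "pmf p k \<le> 1 / real_of_int M" for k using L0[of k] L0v by linarith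
    have cM: "real (card {1..M}) = real_of_int M" using assms(1) by simp
    have "(\<Sum>k\<in>{1..M}. 1 / real_of_int M - pmf p k) = (\<Sum>k\<in>{1..M}. 1 / real_of_int M) - sum (pmf p) {1..M}"
      by (rule sum_subtractf)
    also have "\<dots> = real (card {1..M}) * (1 / real_of_int M) - 1" using s1 by (simp only: sum_constant)
    also have "\<dots> = 0" unfolding cM using Mpos by simp
    finally have zs: "(\<Sum>k\<in>{1..M}. 1 / real_of_int M - pmf p k) = 0" .
    have nn2: "\<forall>k\<in>{1..M}. 0 \<le> 1 / real_of_int M - pmf p k" using pk by (simp add: diff_ge_0_iff_ge)
    have z: "\<forall>k\<in>{1..M}. 1 / real_of_int M - pmf p k = 0"
      using sum_nonneg_eq_0_iff[of "{1..M}" "\<lambda>k. 1 / real_of_int M - pmf p k"] zs nn2 by blast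
    show ?thesis
    proof (rule pmf_eqI)
      fix k
      show "pmf p k = pmf (pmf_of_set {1..M}) k"
      proof (cases "k \<in> {1..M}")
        case True
        then have "pmf p k = 1 / real_of_int M" using z by auto
        moreover have "pmf (pmf_of_set {1..M}) k = 1 / real_of_int M"
          using True cM by (subst pmf_of_set) auto
        ultimately show ?thesis by simp
      next
        case False
        then have "pmf (pmf_of_set {1..M}) k = 0" using assms(1) by (subst pmf_of_set) auto
        then show ?thesis using pmf_zero_out[OF assms(3) False] by simp
      qed
    qed
  qed
  have dir2: "nu1 p = (real_of_int M - 1) / 4" if pu: "p = pmf_of_set {1..M}"
  proof -
    have "L n \<le> real (n + 1) / real_of_int M" for n
      unfolding L_def levy_conc_def
    proof (rule cSUP_least)
      fix x0 :: real
      define W where "W = {k. x0 \<le> real_of_int k \<and> real_of_int k \<le> x0 + real n}"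
      have "W \<subseteq> {\<lceil>x0\<rceil>..\<lceil>x0\<rceil> + int n}"
      proof
        fix k assume "k \<in> W"
        then have h: "x0 \<le> real_of_int k" "real_of_int k \<le> x0 + real n" unfolding W_def by auto
        have "real_of_int (k - \<lceil>x0\<rceil>) \<le> real n" using h le_of_int_ceiling[of x0] by simp linarith
        then have "k - \<lceil>x0\<rceil> \<le> int n" by linarith
        then show "k \<in> {\<lceil>x0\<rceil>..\<lceil>x0\<rceil> + int n}" using h by (auto simp: ceiling_le)
      qed
      then have "card ({1..M} \<inter> W) \<le> card {\<lceil>x0\<rceil>..\<lceil>x0\<rceil> + int n}"
        by (intro card_mono) auto
      then have c: "card ({1..M} \<inter> W) \<le> n + 1" by simp
      have "measure_pmf.prob p W = real (card ({1..M} \<inter> W)) / real (card {1..M})"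
        unfolding pu using assms(1) by (subst measure_pmf_of_set) auto
      also have "\<dots> \<le> real (n + 1) / real_of_int M"
      proof -
      have "real (card ({1..M} \<inter> W)) \<le> real (n + 1)" using c by linarith
      moreover have "real (card {1..M}) = real_of_int M" using assms(1) by simp
      ultimately show ?thesis using Mpos by (simp add: divide_right_mono)
    qed
      finally show "measure_pmf.prob p W \<le> real (n + 1) / real_of_int M" .
    qed simp
    then have "\<And>n. n < N \<Longrightarrow> 1 - L n = b n" using Lge unfolding b_def
      by (smt (verit))
    then have "(\<Sum>n<N. 1 - L n) = (\<Sum>n<N. b n)" by (intro sum.cong) auto
    then show ?thesis using nu bsum by simp
  qed
  show ?thesis using part1 dir1 dir2 by blast
qed

end
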